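(* Let $C=\{c_1,\dots,c_m\}$ and fix the axis $c_1\lhd\dots\lhd c_m$. For all $i,j\in[m]$, the probability that candidate $c_j$ appears in position $i$ in a vote sampled from the Walsh distribution $\mathcal{D}_{\mathrm{SP}}^{\mathrm{Wal}}$ is \[\frac{1}{2^{m-i+1}}\binom{m-i}{j-1}\mathbb{1}_{j\le m-i+1}+\frac{1}{2^{m-i+1}}\binom{m-i}{j-i}\mathbb{1}_{j>i-1}.\]
   Context: A vote over $C$ is a total order on $C$ (position 1 is the top). A vote is single-peaked with respect to the axis $c_1\lhd\dots\lhd c_m$ if for every $t\in[m]$ its $t$ top-ranked candidates form a set of consecutive candidates $\{c_a,c_{a+1},\dots,c_b\}$. The Walsh distribution $\mathcal{D}_{\mathrm{SP}}^{\mathrm{Wal}}$ assigns probability $1/2^{m-1}$ to each vote single-peaked with respect to this axis and probability $0$ to all other votes. $\mathbb{1}$ denotes an indicator. *)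

theory Defs
  imports "HOL-Analysis.Analysis"
begin

text \<open>Candidates c_1,...,c_m are represented by the numbers 1..m (c_k = k), with the axis
  1 < 2 < ... < m. A vote is a list listing all candidates exactly once; position p (1-based)
  holds the candidate v ! (p - 1).\<close>

definition is_vote :: "nat \<Rightarrow> nat list \<Rightarrow> bool" where
  "is_vote m v \<longleftrightarrow> distinct v \<and> set v = {1..m}"

definition single_peaked :: "nat \<Rightarrow> nat list \<Rightarrow> bool" where
  "single_peaked m v \<longleftrightarrow>
     is_vote m v \<and> (\<forall>t\<in>{1..m}. \<exists>a b. set (take t v) = {a..b})"

definition walsh_prob :: "nat \<Rightarrow> nat list \<Rightarrow> real" where
  "walsh_prob m v = (if single_peaked m v then 1 / 2 ^ (m - 1) else 0)"

definition walsh_event_prob :: "nat \<Rightarrow> (nat list \<Rightarrow> bool) \<Rightarrow> real" where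
  "walsh_event_prob m P = (\<Sum>v\<in>{v. is_vote m v \<and> P v}. walsh_prob m v)"

end

theory Submission
  imports Defs
begin

fun sps :: "nat \<Rightarrow> nat \<Rightarrow> nat list list" where
  "sps a 0 = [[]]"
| "sps a (Suc 0) = [[a]]"
| "sps a (Suc (Suc n)) = map (\<lambda>w. w @ [a]) (sps (Suc a) (Suc n))
      @ map (\<lambda>w. w @ [a + Suc n]) (sps a (Suc n))"

definition sp :: "nat \<Rightarrow> nat \<Rightarrow> nat list \<Rightarrow> bool" where
  "sp a n v \<longleftrightarrow> distinct v \<and> set v = {a..<a+n} \<and> (\<forall>t\<in>{1..n}. \<exists>x y. set (take t v) = {x..y})"

lemma sps_length: "w \<in> set (sps a n) \<Longrightarrow> length w = n"
  by (induction a n arbitrary: w rule: sps.induct) auto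

lemma sps_len: "length (sps a (Suc n)) = 2 ^ n"
  by (induction a "Suc n" arbitrary: a n rule: sps.induct) (auto split: nat.splits)

lemma sps_distinct: "distinct (sps a n)"
proof (induction a n rule: sps.induct)
  case (3 a n)
  have d: "a \<noteq> a + Suc n" by simp
  show ?case using 3 d
    by (auto simp: distinct_map inj_on_def)
qed auto

lemma sp_ext:
  assumes "sp b (Suc n) w" and "set (w @ [c]) = {a..<a + Suc (Suc n)}"
  shows "sp a (Suc (Suc n)) (w @ [c])"
proof -
  have d: "distinct w" and s: "set w = {b..<b + Suc n}"
    and p: "\<forall>t\<in>{1..Suc n}. \<exists>x y. set (take t w) = {x..y}" using assms(1) unfolding sp_def by blast+
  have l: "length w = Suc n" using d s distinct_card by fastforce
  have cl: "card (set (w @ [c])) = Suc (Suc n)" using assms(2) by simp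
  have dv: "distinct (w @ [c])"
    using cl l by (intro card_distinct) simp
  have "\<exists>x y. set (take t (w @ [c])) = {x..y}" if t: "t \<in> {1..Suc (Suc n)}" for t
  proof (cases "t \<le> Suc n")
    case True
    have "take t (w @ [c]) = take t w" using True l by simp
    moreover have "t \<in> {1..Suc n}" using t True by simp
    ultimately show ?thesis using p by metis
  next
    case False then have "t = Suc (Suc n)" using t by simp
    then have "take t (w @ [c]) = w @ [c]" using l by simp
    then have "set (take t (w @ [c])) = {a..a + Suc n}" using assms(2)
      by (metis add_Suc_right atLeastLessThanSuc_atLeastAtMost)
    then show ?thesis by blast
  qed
  then show ?thesis unfolding sp_def using dv assms(2) by blast
qed

lemma sp_ext1: assumes "sp (Suc a) (Suc n) w" shows "sp a (Suc (Suc n)) (w @ [a])"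
proof -
  have "set w = {Suc a..<Suc a + Suc n}" using assms unfolding sp_def by blast
  then have "set (w @ [a]) = {a..<a + Suc (Suc n)}" by auto
  then show ?thesis using sp_ext assms by blast
qed

lemma sp_ext2: assumes "sp a (Suc n) w" shows "sp a (Suc (Suc n)) (w @ [a + Suc n])"
proof -
  have "set w = {a..<a + Suc n}" using assms unfolding sp_def by blast
  then have "set (w @ [a + Suc n]) = {a..<a + Suc (Suc n)}" by auto
  then show ?thesis using sp_ext assms by blast
qed

lemma sp_dest:
  assumes "sp a (Suc (Suc n)) v"
  shows "(\<exists>w. v = w @ [a] \<and> sp (Suc a) (Suc n) w) \<or> (\<exists>w. v = w @ [a + Suc n] \<and> sp a (Suc n) w)"
proof -
  have d: "distinct v" and s: "set v = {a..<a + Suc (Suc n)}"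
    and p: "\<forall>t\<in>{1..Suc (Suc n)}. \<exists>x y. set (take t v) = {x..y}" using assms unfolding sp_def by blast+
  have l: "length v = Suc (Suc n)" using d s distinct_card by fastforce
  define w where "w = butlast v"
  define c where "c = last v"
  have "v \<noteq> []" using l by auto
  then have vw: "v = w @ [c]" unfolding w_def c_def by simp
  have lw: "length w = Suc n" using vw l by simp
  have tw: "take (Suc n) v = w" using vw lw by simp
  have "Suc n \<in> {1..Suc (Suc n)}" by simp
  from bspec[OF p this] obtain x y where "set (take (Suc n) v) = {x..y}" by blast
  then have xy: "set w = {x..y}" using tw by simp
  have dw: "distinct w" and cw: "c \<notin> set w" using d vw by auto
  have sv: "set v = insert c (set w)" using vw by simp
  have sw: "set w = {a..<a + Suc (Suc n)} - {c}" using s sv cw by blast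
  have cin: "c \<in> {a..<a + Suc (Suc n)}" using s sv by blast
  have cc: "c = a \<or> c = a + Suc n"
  proof (rule ccontr)
    assume "\<not> ?thesis"
    then have "a \<in> set w" "a + Suc n \<in> set w" using sw cin by auto
    then have "x \<le> a" "a + Suc n \<le> y" using xy by auto
    moreover have "a \<le> c" "c \<le> a + Suc n" using cin by auto
    ultimately have "c \<in> {x..y}" by simp
    then show False using cw xy by simp
  qed
  have pw: "\<forall>t\<in>{1..Suc n}. \<exists>x y. set (take t w) = {x..y}"
  proof
    fix t assume t: "t \<in> {1..Suc n}"
    then have "take t w = take t v" using vw lw by simp
    moreover have "t \<in> {1..Suc (Suc n)}" using t by simp
    ultimately show "\<exists>x y. set (take t w) = {x..y}" using bspec[OF p] by simp
  qed
  show ?thesis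
  proof (cases "c = a")
    case True
    have "{a..<a + Suc (Suc n)} - {a} = {Suc a..<Suc a + Suc (n::nat)}"
      by (rule set_eqI) (simp, arith)
    then have "set w = {Suc a..<Suc a + Suc n}" using sw True by simp
    then have "sp (Suc a) (Suc n) w" using dw pw unfolding sp_def by blast
    then show ?thesis using True vw by blast
  next
    case False
    then have c: "c = a + Suc n" using cc by simp
    have "{a..<a + Suc (Suc n)} - {a + Suc n} = {a..<a + Suc (n::nat)}"
      by (rule set_eqI) (simp, arith)
    then have "set w = {a..<a + Suc n}" using sw c by simp
    then have "sp a (Suc n) w" using dw pw unfolding sp_def by blast
    then show ?thesis using c vw by blast
  qed
qed

lemma sp_sps: "sp a n v \<longleftrightarrow> v \<in> set (sps a n)"
proof (induction a n arbitrary: v rule: sps.induct)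
  case (1 a)
  then show ?case by (auto simp: sp_def)
next
  case (2 a)
  show ?case
  proof
    assume "sp a (Suc 0) v"
    then have d: "distinct v" and s: "set v = {a..<a + Suc 0}" unfolding sp_def by blast+
    then have "length v = 1" using distinct_card by fastforce
    then obtain x where x: "v = [x]" by (metis One_nat_def length_0_conv length_Suc_conv)
    then have "x = a" using s by simp
    then show "v \<in> set (sps a (Suc 0))" using x by simp
  next
    assume "v \<in> set (sps a (Suc 0))"
    then have v: "v = [a]" by simp
    have "\<forall>t\<in>{1..Suc 0}. \<exists>x y. set (take t [a]) = {x..y}"
    proof
      fix t assume "t \<in> {1..Suc 0}"
      then have "t = 1" by simp
      then have "set (take t [a]) = {a..a}" by simp
      then show "\<exists>x y. set (take t [a]) = {x..y}" by blast
    qed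
    moreover have "set [a] = {a..<a + Suc 0}" by simp
    ultimately show "sp a (Suc 0) v" unfolding sp_def v by simp
  qed
next
  case (3 a n)
  show ?case
  proof
    assume "sp a (Suc (Suc n)) v"
    then have "(\<exists>w. v = w @ [a] \<and> sp (Suc a) (Suc n) w) \<or> (\<exists>w. v = w @ [a + Suc n] \<and> sp a (Suc n) w)"
      by (rule sp_dest)
    then show "v \<in> set (sps a (Suc (Suc n)))"
    proof
      assume "\<exists>w. v = w @ [a] \<and> sp (Suc a) (Suc n) w"
      then obtain w where "v = w @ [a]" "w \<in> set (sps (Suc a) (Suc n))" using 3 by blast
      then show ?thesis by simp
    next
      assume "\<exists>w. v = w @ [a + Suc n] \<and> sp a (Suc n) w"
      then obtain w where "v = w @ [a + Suc n]" "w \<in> set (sps a (Suc n))" using 3 by blast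
      then show ?thesis by simp
    qed
  next
    assume "v \<in> set (sps a (Suc (Suc n)))"
    then have "(\<exists>w. v = w @ [a] \<and> w \<in> set (sps (Suc a) (Suc n))) \<or> (\<exists>w. v = w @ [a + Suc n] \<and> w \<in> set (sps a (Suc n)))"
      by auto
    then show "sp a (Suc (Suc n)) v"
    proof
      assume "\<exists>w. v = w @ [a] \<and> w \<in> set (sps (Suc a) (Suc n))"
      then obtain w where "v = w @ [a]" "sp (Suc a) (Suc n) w" using 3 by blast
      then show ?thesis using sp_ext1 by simp
    next
      assume "\<exists>w. v = w @ [a + Suc n] \<and> w \<in> set (sps a (Suc n))"
      then obtain w where "v = w @ [a + Suc n]" "sp a (Suc n) w" using 3 by blast
      then show ?thesis using sp_ext2 by simp
    qed
  qed
qed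

definition F :: "nat \<Rightarrow> nat \<Rightarrow> nat \<Rightarrow> nat \<Rightarrow> nat" where
  "F a n k j = (if a \<le> j then 2 ^ k * (((n - k - 1) choose (j - a))
      + (if k \<le> j - a then ((n - k - 1) choose (j - a - k)) else 0)) else 0)"

lemma F_step:
  assumes "k < Suc n"
  shows "F (Suc a) (Suc n) k j + F a (Suc n) k j = F a (Suc (Suc n)) k j"
proof -
  obtain M where M: "Suc n - k - 1 = M" "Suc (Suc n) - k - 1 = Suc M"
    using assms by (intro that[of "n - k"]) auto
  have "(j::nat) < a \<or> j = a \<or> (\<exists>d. j = a + Suc d)" by presburger
  then consider "j < a" | "j = a" | d where "j = a + Suc d" by blast
  then show ?thesis
  proof cases
    case 1 then show ?thesis by (simp add: F_def)
  next
    case 2 then show ?thesis using M by (simp add: F_def)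
  next
    case 3
    have e1: "(M choose d) + (M choose (Suc d)) = Suc M choose (Suc d)" by simp
    have e2: "(if k \<le> d then (M choose (d - k)) else 0) + (if k \<le> Suc d then (M choose (Suc d - k)) else 0)
        = (if k \<le> Suc d then (Suc M choose (Suc d - k)) else 0)"
    proof (cases "k \<le> d")
      case True
      then have "Suc d - k = Suc (d - k)" by simp
      then show ?thesis using True by simp
    next
      case False
      then show ?thesis by (cases "k = Suc d") auto
    qed
    have "F (Suc a) (Suc n) k j + F a (Suc n) k j
        = 2 ^ k * (((M choose d) + (M choose (Suc d))) + ((if k \<le> d then (M choose (d - k)) else 0) + (if k \<le> Suc d then (M choose (Suc d - k)) else 0)))"
      using 3 M unfolding F_def by (simp add: algebra_simps)
    also have "\<dots> = 2 ^ k * ((Suc M choose (Suc d)) + (if k \<le> Suc d then (Suc M choose (Suc d - k)) else 0))"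
      using e1 e2 by simp
    also have "\<dots> = F a (Suc (Suc n)) k j" using 3 M unfolding F_def by simp
    finally show ?thesis .
  qed
qed

lemma cnt: "k < n \<Longrightarrow> 2 * length (filter (\<lambda>v. v ! k = j) (sps a n)) = F a n k j"
proof (induction a n arbitrary: k j rule: sps.induct)
  case (1 a) then show ?case by simp
next
  case (2 a) then show ?case by (auto simp: F_def)
next
  case (3 a n)
  have l1: "length (filter (\<lambda>v. v ! k = j) (map (\<lambda>w. w @ [c]) (sps b (Suc n))))
     = length (filter (\<lambda>w. (if k < Suc n then w ! k else c) = j) (sps b (Suc n)))" for b c
  proof -
    have "filter (\<lambda>w. (w @ [c]) ! k = j) (sps b (Suc n)) = filter (\<lambda>w. (if k < Suc n then w ! k else c) = j) (sps b (Suc n))"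
      using "3.prems" by (intro filter_cong) (auto simp: nth_append sps_length)
    then show ?thesis by (simp add: comp_def)
  qed
  show ?case
  proof (cases "k < Suc n")
    case True
    have "2 * length (filter (\<lambda>v. v ! k = j) (sps a (Suc (Suc n))))
      = 2 * length (filter (\<lambda>v. v ! k = j) (sps (Suc a) (Suc n))) + 2 * length (filter (\<lambda>v. v ! k = j) (sps a (Suc n)))"
      using True l1 by simp
    also have "\<dots> = F (Suc a) (Suc n) k j + F a (Suc n) k j" using 3 True by simp
    also have "\<dots> = F a (Suc (Suc n)) k j" using F_step True by simp
    finally show ?thesis .
  next
    case False
    then have k: "k = Suc n" using 3 by simp
    have f: "length (filter (\<lambda>w. c = j) xs) = (if c = j then length xs else 0)" for c :: nat and xs :: "nat list list"
      by simp
    have "2 * length (filter (\<lambda>v. v ! k = j) (sps a (Suc (Suc n))))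
      = 2 * ((if a = j then 2 ^ n else 0) + (if a + Suc n = j then 2 ^ n else 0))"
      using k l1 f sps_len by simp
    also have "\<dots> = F a (Suc (Suc n)) k j" using k by (auto simp: F_def)
    finally show ?thesis .
  qed
qed

lemma sp_iff: "single_peaked m v \<longleftrightarrow> sp 1 m v"
proof -
  have "{1..<1 + m} = {1..m}" by (rule set_eqI) (simp, arith)
  then show ?thesis unfolding single_peaked_def is_vote_def sp_def by simp
qed

theorem corollary1:
  fixes m i j :: nat
  assumes "i \<in> {1..m}" and "j \<in> {1..m}"
  shows "walsh_event_prob m (\<lambda>v. v ! (i - 1) = j) =
           1 / 2 ^ (m - i + 1) * real ((m - i) choose (j - 1)) * (if j \<le> m - i + 1 then 1 else 0)
         + 1 / 2 ^ (m - i + 1) * real ((m - i) choose (j - i)) * (if j > i - 1 then 1 else 0)"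
proof -
  define P where "P = (\<lambda>v::nat list. v ! (i - 1) = j)"
  define A where "A = {v. is_vote m v \<and> P v}"
  define L where "L = filter P (sps 1 m)"
  define c :: real where "c = 1 / 2 ^ (m - 1)"
  have i: "1 \<le> i" "i \<le> m" and j: "1 \<le> j" "j \<le> m" using assms by auto
  have finA: "finite A"
  proof (rule finite_subset)
    show "A \<subseteq> {xs. set xs \<subseteq> {1..m} \<and> length xs = m}"
      unfolding A_def is_vote_def using distinct_card by fastforce
    show "finite {xs. set xs \<subseteq> {1..m} \<and> length xs = m}"
      by (rule finite_lists_length_eq) simp
  qed
  have LA: "set L \<subseteq> A"
  proof
    fix v assume "v \<in> set L"
    then have "v \<in> set (sps 1 m)" "P v" unfolding L_def by auto
    then have "single_peaked m v" "P v" using sp_iff sp_sps by auto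
    then show "v \<in> A" unfolding A_def single_peaked_def by simp
  qed
  have "walsh_event_prob m P = (\<Sum>v\<in>A. if v \<in> set L then c else 0)"
    unfolding walsh_event_prob_def A_def[symmetric]
  proof (rule sum.cong)
    fix v assume "v \<in> A"
    then have "P v" unfolding A_def by simp
    then show "walsh_prob m v = (if v \<in> set L then c else 0)"
      unfolding walsh_prob_def L_def c_def using sp_iff sp_sps by simp
  qed simp
  also have "\<dots> = (\<Sum>v\<in>{v\<in>A. v \<in> set L}. c)"
    using finA by (rule sum.inter_filter[symmetric])
  also have "{v\<in>A. v \<in> set L} = set L" using LA by blast
  also have "(\<Sum>v\<in>set L. c) = real (length L) * c"
    using distinct_card[of L] sps_distinct[of 1 m] unfolding L_def by simp
  finally have W: "walsh_event_prob m P = real (length L) * c" .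
  have "2 * length L = F 1 m (i - 1) j" unfolding L_def P_def using i by (intro cnt) simp
  also have "\<dots> = 2 ^ (i - 1) * (((m - i) choose (j - 1))
      + (if i \<le> j then ((m - i) choose (j - i)) else 0))"
    unfolding F_def using i j
    by (simp add: diff_diff_add le_diff_conv2 add.commute)
  finally have L2: "2 * length L = 2 ^ (i - 1) * (((m - i) choose (j - 1))
      + (if i \<le> j then ((m - i) choose (j - i)) else 0))" .
  have ch: "((m - i) choose (j - 1)) = ((m - i) choose (j - 1)) * (if j \<le> m - i + 1 then 1 else 0)"
    by (cases "j \<le> m - i + 1") auto
  have pw: "(2::real) ^ m = 2 ^ (i - 1) * 2 ^ (m - i + 1)"
  proof -
    have "m = (i - 1) + (m - i + 1)" using i by simp
    then show ?thesis by (metis power_add)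
  qed
  have pw2: "(2::real) ^ m = 2 * 2 ^ (m - 1)"
  proof -
    have "m = Suc (m - 1)" using i by simp
    then show ?thesis by (metis power_Suc)
  qed
  have "real (length L) * c = real (2 * length L) / 2 ^ m"
    unfolding c_def using pw2 by (simp add: field_simps)
  also have "\<dots> = (2 ^ (i - 1) * (real ((m - i) choose (j - 1)) * (if j \<le> m - i + 1 then 1 else 0)
      + real ((m - i) choose (j - i)) * (if j > i - 1 then 1 else 0))) / (2 ^ (i - 1) * 2 ^ (m - i + 1))"
    unfolding L2 pw using i
    by (subst ch) (auto simp: of_nat_mult)
  also have "\<dots> = 1 / 2 ^ (m - i + 1) * real ((m - i) choose (j - 1)) * (if j \<le> m - i + 1 then 1 else 0)
         + 1 / 2 ^ (m - i + 1) * real ((m - i) choose (j - i)) * (if j > i - 1 then 1 else 0)"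
    by (simp add: field_simps)
  finally show ?thesis using W unfolding P_def by simp
qed

end
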